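(* For every $n\ge1$, $$\hat B_{n+1}(x)=(n+1+x+nx^2)\,\hat B_n(x)+(1-x)(1+x^2)\,\hat B_n'(x).$$
   Context: $\mathcal B_n$ is the set of signed permutations (bijections $\sigma$ of $\{\pm1,\dots,\pm n\}$ with $\sigma(-i)=-\sigma(i)$), written as words $\sigma(1)\cdots\sigma(n)$ with $\sigma(0)=0$. An index $i\in\{0\}\cup[n-1]$ is an alternating descent of $\sigma$ if either $\sigma(i)<\sigma(i+1)$ and $i$ is even, or $\sigma(i)>\sigma(i+1)$ and $i$ is odd; $\hat B_n(x)=\sum_{\sigma\in\mathcal B_n}x^{\hat d_B(\sigma)}$ with $\hat d_B(\sigma)$ the number of alternating descents. *)

theory Defs
  imports "HOL-Computational_Algebra.Polynomial"
begin

text \<open>A signed permutation of [n] is encoded by its word sigma(1)..sigma(n) as a function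
  nat => int with sigma 0 = 0, sigma i = 0 for i > n (extensionality), and
  i |-> |sigma i| a bijection of {1..n}. The value at -i is then forced to be -sigma(i).\<close>

definition signed_perms :: "nat \<Rightarrow> (nat \<Rightarrow> int) set" where
  "signed_perms n = {\<sigma>. \<sigma> 0 = 0 \<and> (\<forall>i>n. \<sigma> i = 0) \<and>
      bij_betw (\<lambda>i. nat \<bar>\<sigma> i\<bar>) {1..n} {1..n}}"

definition alt_descent :: "(nat \<Rightarrow> int) \<Rightarrow> nat \<Rightarrow> bool" where
  "alt_descent \<sigma> i \<longleftrightarrow> (even i \<and> \<sigma> i < \<sigma> (i+1)) \<or> (odd i \<and> \<sigma> i > \<sigma> (i+1))"

definition alt_des_B :: "nat \<Rightarrow> (nat \<Rightarrow> int) \<Rightarrow> nat" where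
  "alt_des_B n \<sigma> = card {i \<in> {0..<n}. alt_descent \<sigma> i}"

definition Bhat :: "nat \<Rightarrow> int poly" where
  "Bhat n = (\<Sum>\<sigma>\<in>signed_perms n. monom 1 (alt_des_B n \<sigma>))"

end

theory Submission imports Defs begin

abbreviation P where "P \<equiv> signed_perms"

lemma sp_zero: "\<sigma> \<in> P n \<Longrightarrow> \<sigma> 0 = 0"
  by (simp add: signed_perms_def)
lemma sp_out: "\<sigma> \<in> P n \<Longrightarrow> n < i \<Longrightarrow> \<sigma> i = 0"
  by (simp add: signed_perms_def)
lemma sp_bij: "\<sigma> \<in> P n \<Longrightarrow> bij_betw (\<lambda>i. nat \<bar>\<sigma> i\<bar>) {1..n} {1..n}"
  by (simp add: signed_perms_def)
lemma sp_range: assumes "\<sigma> \<in> P n" "i \<in> {1..n}" shows "1 \<le> \<bar>\<sigma> i\<bar> \<and> \<bar>\<sigma> i\<bar> \<le> int n"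
proof -
  have "nat \<bar>\<sigma> i\<bar> \<in> {1..n}" using bij_betw_apply[OF sp_bij[OF assms(1)] assms(2)] .
  then show ?thesis by auto
qed
lemma sp_abs_le: assumes "\<sigma> \<in> P n" shows "\<bar>\<sigma> i\<bar> \<le> int n"
proof (cases "i = 0")
  case True then show ?thesis using sp_zero[OF assms] by simp
next
  case False
  show ?thesis
  proof (cases "i \<le> n")
    case True then show ?thesis using sp_range[OF assms, of i] False by auto
  next
    case False then show ?thesis using sp_out[OF assms, of i] by auto
  qed
qed
lemma sp_inj: assumes "\<sigma> \<in> P n" "i \<in> {1..n}" "k \<in> {1..n}" "\<bar>\<sigma> i\<bar> = \<bar>\<sigma> k\<bar>" shows "i = k"
  using inj_onD[OF bij_betw_imp_inj_on[OF sp_bij[OF assms(1)]], of i k] assms(2-4) by auto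
lemma sp_intro:
  assumes "\<sigma> 0 = 0" "\<And>i. n < i \<Longrightarrow> \<sigma> i = 0" "inj_on (\<lambda>i. nat \<bar>\<sigma> i\<bar>) {1..n}"
    "\<And>i. i \<in> {1..n} \<Longrightarrow> 1 \<le> \<bar>\<sigma> i\<bar> \<and> \<bar>\<sigma> i\<bar> \<le> int n"
  shows "\<sigma> \<in> P n"
proof -
  have "(\<lambda>i. nat \<bar>\<sigma> i\<bar>) ` {1..n} \<subseteq> {1..n}" using assms(4) by force
  then have "(\<lambda>i. nat \<bar>\<sigma> i\<bar>) ` {1..n} = {1..n}" using endo_inj_surj assms(3) by blast
  then show ?thesis using assms unfolding signed_perms_def bij_betw_def by auto
qed

definition ins :: "nat \<Rightarrow> (nat \<Rightarrow> int) \<Rightarrow> nat \<Rightarrow> int \<Rightarrow> (nat \<Rightarrow> int)" where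
  "ins n \<sigma> j e = (\<lambda>k. if k \<le> j then \<sigma> k else if k = j+1 then e * int (n+1) else - \<sigma> (k-1))"

lemma ins_mem:
  assumes s: "\<sigma> \<in> P n" and j: "j \<le> n" and e: "e \<in> {1,-1}"
  shows "ins n \<sigma> j e \<in> P (n+1)"
proof (rule sp_intro)
  show "ins n \<sigma> j e 0 = 0" using sp_zero[OF s] by (simp add: ins_def)
  show "ins n \<sigma> j e i = 0" if "n + 1 < i" for i
    using that sp_out[OF s, of "i-1"] j by (simp add: ins_def)
  have ea: "\<bar>e\<bar> = 1" using e by auto
  show "1 \<le> \<bar>ins n \<sigma> j e i\<bar> \<and> \<bar>ins n \<sigma> j e i\<bar> \<le> int (n + 1)" if "i \<in> {1..n+1}" for i
  proof -
    consider "i \<le> j" | "i = j+1" | "\<not> i \<le> j" "i \<noteq> j+1" by blast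
    then show ?thesis
    proof cases
      case 1 then show ?thesis using that sp_range[OF s, of i] j by (simp add: ins_def)
    next
      case 2 then show ?thesis using ea by (simp add: ins_def abs_mult)
    next
      case 3
      then have "i-1 \<in> {1..n}" using that j by auto
      then show ?thesis using 3 sp_range[OF s, of "i-1"] by (simp add: ins_def)
    qed
  qed
  show "inj_on (\<lambda>i. nat \<bar>ins n \<sigma> j e i\<bar>) {1..n + 1}"
  proof (rule inj_onI)
    fix i k assume i: "i \<in> {1..n+1}" and k: "k \<in> {1..n+1}"
      and eq: "nat \<bar>ins n \<sigma> j e i\<bar> = nat \<bar>ins n \<sigma> j e k\<bar>"
    have eq': "\<bar>ins n \<sigma> j e i\<bar> = \<bar>ins n \<sigma> j e k\<bar>" using eq by simp
    have cls: "(m \<le> j \<and> m \<in> {1..n} \<and> \<bar>ins n \<sigma> j e m\<bar> = \<bar>\<sigma> m\<bar>) \<or> (m = j+1 \<and> \<bar>ins n \<sigma> j e m\<bar> = int n + 1)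
       \<or> (m > j+1 \<and> m-1 \<in> {1..n} \<and> \<bar>ins n \<sigma> j e m\<bar> = \<bar>\<sigma> (m-1)\<bar>)" if "m \<in> {1..n+1}" for m
      using that j ea by (auto simp: ins_def abs_mult)
    have r1: "\<And>m. m \<in> {1..n} \<Longrightarrow> \<bar>\<sigma> m\<bar> \<le> int n" using sp_range[OF s] by blast
    note inj = sp_inj[OF s]
    from cls[OF i] cls[OF k] show "i = k"
    proof (elim disjE conjE)
      assume "i \<le> j" "i \<in> {1..n}" "\<bar>ins n \<sigma> j e i\<bar> = \<bar>\<sigma> i\<bar>"
        "k \<le> j" "k \<in> {1..n}" "\<bar>ins n \<sigma> j e k\<bar> = \<bar>\<sigma> k\<bar>"
      then show ?thesis using eq' inj[of i k] by simp
    next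
      assume "i \<le> j" "i \<in> {1..n}" "\<bar>ins n \<sigma> j e i\<bar> = \<bar>\<sigma> i\<bar>"
        "k = j+1" "\<bar>ins n \<sigma> j e k\<bar> = int n + 1"
      then show ?thesis using eq' r1[of i] by simp
    next
      assume "i \<le> j" "i \<in> {1..n}" "\<bar>ins n \<sigma> j e i\<bar> = \<bar>\<sigma> i\<bar>"
        "k > j+1" "k-1 \<in> {1..n}" "\<bar>ins n \<sigma> j e k\<bar> = \<bar>\<sigma> (k-1)\<bar>"
      then show ?thesis using eq' inj[of i "k-1"] by simp
    next
      assume "i = j+1" "\<bar>ins n \<sigma> j e i\<bar> = int n + 1"
        "k \<le> j" "k \<in> {1..n}" "\<bar>ins n \<sigma> j e k\<bar> = \<bar>\<sigma> k\<bar>"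
      then show ?thesis using eq' r1[of k] by simp
    next
      assume "i = j+1" "k = j+1" then show ?thesis by simp
    next
      assume "i = j+1" "\<bar>ins n \<sigma> j e i\<bar> = int n + 1"
        "k > j+1" "k-1 \<in> {1..n}" "\<bar>ins n \<sigma> j e k\<bar> = \<bar>\<sigma> (k-1)\<bar>"
      then show ?thesis using eq' r1[of "k-1"] by simp
    next
      assume "i > j+1" "i-1 \<in> {1..n}" "\<bar>ins n \<sigma> j e i\<bar> = \<bar>\<sigma> (i-1)\<bar>"
        "k \<le> j" "k \<in> {1..n}" "\<bar>ins n \<sigma> j e k\<bar> = \<bar>\<sigma> k\<bar>"
      then show ?thesis using eq' inj[of "i-1" k] by simp
    next
      assume "i > j+1" "i-1 \<in> {1..n}" "\<bar>ins n \<sigma> j e i\<bar> = \<bar>\<sigma> (i-1)\<bar>"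
        "k = j+1" "\<bar>ins n \<sigma> j e k\<bar> = int n + 1"
      then show ?thesis using eq' r1[of "i-1"] by simp
    next
      assume "i > j+1" "i-1 \<in> {1..n}" "\<bar>ins n \<sigma> j e i\<bar> = \<bar>\<sigma> (i-1)\<bar>"
        "k > j+1" "k-1 \<in> {1..n}" "\<bar>ins n \<sigma> j e k\<bar> = \<bar>\<sigma> (k-1)\<bar>"
      then show ?thesis using eq' inj[of "i-1" "k-1"] by simp
    qed
  qed
qed

lemma ins_inj:
  assumes s: "\<sigma> \<in> P n" and s': "\<sigma>' \<in> P n" and j: "j \<le> n" and j': "j' \<le> n"
    and e: "e \<in> {1,-1}" and e': "e' \<in> {1,-1}" and eq: "ins n \<sigma> j e = ins n \<sigma>' j' e'"
  shows "\<sigma> = \<sigma>' \<and> j = j' \<and> e = e'"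
proof -
  have ea: "\<bar>e\<bar> = 1" "\<bar>e'\<bar> = 1" using e e' by auto
  have jj: "j = j'"
  proof (rule ccontr)
    assume "j \<noteq> j'"
    then consider "j < j'" | "j' < j" by linarith
    then show False
    proof cases
      case 1
      have "ins n \<sigma> j e (j+1) = ins n \<sigma>' j' e' (j+1)" using eq by simp
      then have "e * int (n+1) = \<sigma>' (j+1)" using 1 by (simp add: ins_def)
      then have "\<bar>e * int (n+1)\<bar> \<le> int n" using sp_abs_le[OF s', of "j+1"] by simp
      then show False using ea by (simp add: abs_mult)
    next
      case 2
      have "ins n \<sigma> j e (j'+1) = ins n \<sigma>' j' e' (j'+1)" using eq by simp
      then have "e' * int (n+1) = \<sigma> (j'+1)" using 2 by (simp add: ins_def)
      then have "\<bar>e' * int (n+1)\<bar> \<le> int n" using sp_abs_le[OF s, of "j'+1"] by simp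
      then show False using ea by (simp add: abs_mult)
    qed
  qed
  have "ins n \<sigma> j e (j+1) = ins n \<sigma>' j' e' (j+1)" using eq by simp
  then have ee: "e = e'" using jj by (simp add: ins_def)
  have "\<sigma> k = \<sigma>' k" for k
  proof (cases "k \<le> j")
    case True
    have "ins n \<sigma> j e k = ins n \<sigma>' j' e' k" using eq by simp
    then show ?thesis using True jj by (simp add: ins_def)
  next
    case False
    have "ins n \<sigma> j e (k+1) = ins n \<sigma>' j' e' (k+1)" using eq by simp
    then show ?thesis using False jj by (simp add: ins_def)
  qed
  then show ?thesis using jj ee by auto
qed

lemma ins_surj:
  assumes t: "\<tau> \<in> P (n+1)"
  shows "\<exists>\<sigma> j e. \<sigma> \<in> P n \<and> j \<le> n \<and> e \<in> {1,-1} \<and> \<tau> = ins n \<sigma> j e"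
proof -
  have "n+1 \<in> (\<lambda>i. nat \<bar>\<tau> i\<bar>) ` {1..n+1}" using sp_bij[OF t] unfolding bij_betw_def by auto
  then obtain k where k: "k \<in> {1..n+1}" and tk: "nat \<bar>\<tau> k\<bar> = n+1" by auto
  have tk': "\<bar>\<tau> k\<bar> = int n + 1" using tk by linarith
  define j where "j = k - 1"
  define e :: int where "e = (if \<tau> k > 0 then 1 else -1)"
  define \<sigma> where "\<sigma> = (\<lambda>i. if i \<le> j then \<tau> i else if i \<le> n then - \<tau> (i+1) else 0)"
  have kj: "k = j+1" and jn: "j \<le> n" using k by (auto simp: j_def)
  have ek: "e * int (n+1) = \<tau> k" using tk' by (auto simp: e_def abs_if split: if_splits)
  have tother: "1 \<le> \<bar>\<tau> i\<bar> \<and> \<bar>\<tau> i\<bar> \<le> int n" if "i \<in> {1..n+1}" "i \<noteq> k" for i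
  proof -
    have "\<bar>\<tau> i\<bar> \<noteq> \<bar>\<tau> k\<bar>" using sp_inj[OF t that(1) k] that(2) by blast
    then show ?thesis using sp_range[OF t that(1)] tk' by simp
  qed
  have sP: "\<sigma> \<in> P n"
  proof (rule sp_intro)
    show "\<sigma> 0 = 0" using sp_zero[OF t] by (simp add: \<sigma>_def)
    show "\<sigma> i = 0" if "n < i" for i using that jn by (simp add: \<sigma>_def)
    show "1 \<le> \<bar>\<sigma> i\<bar> \<and> \<bar>\<sigma> i\<bar> \<le> int n" if "i \<in> {1..n}" for i
    proof (cases "i \<le> j")
      case True then show ?thesis using tother[of i] that kj by (simp add: \<sigma>_def)
    next
      case False then show ?thesis using tother[of "i+1"] that kj by (simp add: \<sigma>_def)
    qed
    show "inj_on (\<lambda>i. nat \<bar>\<sigma> i\<bar>) {1..n}"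
    proof (rule inj_onI)
      fix i l assume i: "i \<in> {1..n}" and l: "l \<in> {1..n}" and eq: "nat \<bar>\<sigma> i\<bar> = nat \<bar>\<sigma> l\<bar>"
      have eq': "\<bar>\<sigma> i\<bar> = \<bar>\<sigma> l\<bar>" using eq by simp
      note inj = sp_inj[OF t]
      show "i = l"
      proof (cases "i \<le> j"; cases "l \<le> j")
        assume "i \<le> j" "l \<le> j" then show ?thesis using eq' inj[of i l] i l by (simp add: \<sigma>_def)
      next
        assume "i \<le> j" "\<not> l \<le> j" then show ?thesis using eq' inj[of i "l+1"] i l by (simp add: \<sigma>_def)
      next
        assume "\<not> i \<le> j" "l \<le> j" then show ?thesis using eq' inj[of "i+1" l] i l by (simp add: \<sigma>_def)
      next
        assume "\<not> i \<le> j" "\<not> l \<le> j" then show ?thesis using eq' inj[of "i+1" "l+1"] i l by (simp add: \<sigma>_def)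
      qed
    qed
  qed
  have "\<tau> = ins n \<sigma> j e"
  proof
    fix i
    show "\<tau> i = ins n \<sigma> j e i"
    proof (cases "i \<le> j")
      case True then show ?thesis by (simp add: ins_def \<sigma>_def)
    next
      case False
      show ?thesis
      proof (cases "i = j+1")
        case True then show ?thesis using ek kj by (simp add: ins_def)
      next
        case False2: False
        show ?thesis
        proof (cases "i \<le> n+1")
          case True
          then have "\<not> i - 1 \<le> j" "i - 1 \<le> n" "i - 1 + 1 = i" using False False2 by auto
          then show ?thesis using False False2 by (simp add: ins_def \<sigma>_def)
        next
          case False3: False then show ?thesis using False False2 sp_out[OF t, of i] jn by (auto simp: ins_def \<sigma>_def)
        qed
      qed
    qed
  qed
  moreover have "e \<in> {1,-1}" by (simp add: e_def)
  ultimately show ?thesis using sP jn by blast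
qed

lemma card_filter_sum: fixes n :: nat shows "int (card {i \<in> {0..<n}. Q i}) = (\<Sum>i<n. if Q i then 1 else 0)"
proof (induction n)
  case 0 show ?case by simp
next
  case (Suc n)
  have "{i\<in>{0..<Suc n}. Q i} = (if Q n then insert n {i\<in>{0..<n}. Q i} else {i\<in>{0..<n}. Q i})"
    by (auto simp: less_Suc_eq)
  then show ?case using Suc by simp
qed

lemma des_sum: "int (alt_des_B n \<sigma>) = (\<Sum>i<n. if alt_descent \<sigma> i then 1 else 0)"
  unfolding alt_des_B_def by (rule card_filter_sum)

lemma split_sum:
  fixes a b :: "nat \<Rightarrow> int"
  assumes jn: "j \<le> n" and lo: "\<And>i. i < j \<Longrightarrow> b i = a i"
    and hi: "\<And>i. j < i \<Longrightarrow> i < n \<Longrightarrow> b (i+1) = a i"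
  shows "(\<Sum>i<n+1. b i) = (\<Sum>i<n. a i) - (if j < n then a j else 0) + b j + (if j < n then b (j+1) else 0)"
proof (cases "j = n")
  case True
  then show ?thesis using lo by simp
next
  case False
  then have jl: "j < n" using jn by simp
  have A: "(\<Sum>i<n. a i) = sum a {0..<j} + a j + sum a {Suc j..<n}"
    using sum.atLeastLessThan_concat[of 0 j n a] sum.atLeast_Suc_lessThan[of j n a] jl
    by (simp add: lessThan_atLeast0)
  have B: "(\<Sum>i<n+1. b i) = sum b {0..<j} + b j + b (j+1) + sum b {Suc (Suc j)..<Suc n}"
    using sum.atLeastLessThan_concat[of 0 j "Suc n" b] sum.atLeast_Suc_lessThan[of j "Suc n" b]
      sum.atLeast_Suc_lessThan[of "Suc j" "Suc n" b] jl
    by (simp add: lessThan_atLeast0)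
  have C: "sum b {Suc (Suc j)..<Suc n} = sum a {Suc j..<n}"
    unfolding sum.atLeast_Suc_lessThan_Suc_shift
    by (rule sum.cong) (auto intro: hi[simplified])
  have D: "sum b {0..<j} = sum a {0..<j}" by (rule sum.cong) (auto intro: lo)
  show ?thesis using A B C D jl by simp
qed

lemma des_ins:
  assumes s: "\<sigma> \<in> P n" and jn: "j \<le> n" and e: "e \<in> {1,-1}"
  shows "int (alt_des_B (n+1) (ins n \<sigma> j e)) = int (alt_des_B n \<sigma>)
     - (if j < n \<and> alt_descent \<sigma> j then 1 else 0)
     + (if j < n then 2 else 1) * (if (e = 1) = even j then 1 else 0)"
proof -
  let ?t = "ins n \<sigma> j e"
  define a where "a i = (if alt_descent \<sigma> i then 1 else (0::int))" for i
  define b where "b i = (if alt_descent ?t i then 1 else (0::int))" for i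
  have lo: "b i = a i" if "i < j" for i
    using that by (simp add: a_def b_def alt_descent_def ins_def)
  have hi: "b (i+1) = a i" if "j < i" "i < n" for i
    using that by (simp add: a_def b_def alt_descent_def ins_def)
  have sj: "\<bar>\<sigma> j\<bar> \<le> int n" "\<bar>\<sigma> (j+1)\<bar> \<le> int n" using sp_abs_le[OF s] by auto
  have bj: "b j = (if (e = 1) = even j then 1 else 0)"
  proof -
    have "ins n \<sigma> j e j = \<sigma> j" "ins n \<sigma> j e (j+1) = e * int (n+1)" by (simp_all add: ins_def)
    then show ?thesis using e sj(1) unfolding b_def alt_descent_def by (cases "e = 1") (auto simp: abs_le_iff)
  qed
  have bj1: "b (j+1) = (if (e = 1) = even j then 1 else 0)"
  proof -
    have "ins n \<sigma> j e (j+1) = e * int (n+1)" "ins n \<sigma> j e (j+1+1) = - \<sigma> (j+1)" by (simp_all add: ins_def)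
    then show ?thesis using e sj(2) unfolding b_def alt_descent_def by (cases "e = 1") (auto simp: abs_le_iff)
  qed
  have X: "int (alt_des_B (n+1) ?t) = (\<Sum>i<n+1. b i)" by (simp add: des_sum b_def)
  have Y: "(\<Sum>i<n+1. b i) = (\<Sum>i<n. a i) - (if j < n then a j else 0) + b j + (if j < n then b (j+1) else 0)"
    by (rule split_sum) (use jn lo hi in auto)
  have Z: "(\<Sum>i<n. a i) = int (alt_des_B n \<sigma>)" by (simp add: des_sum a_def)
  show ?thesis unfolding X Y Z using bj bj1 by (auto simp: a_def)
qed

lemma poly_id:
  assumes "d \<le> n"
  shows "of_nat d * (monom 1 (d-1) + monom 1 (d+1)) + of_nat (n-d) * (monom 1 d + monom 1 (d+2))
      + (monom 1 d + monom 1 (d+1))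
    = [:of_nat n + 1, 1, of_nat n:] * monom (1::int) d + ([:1, -1:] * [:1, 0, 1:]) * pderiv (monom 1 d)"
proof -
  have "poly (of_nat d * (monom 1 (d-1) + monom 1 (d+1)) + of_nat (n-d) * (monom 1 d + monom 1 (d+2))
      + (monom 1 d + monom 1 (d+1))) x
    = poly ([:of_nat n + 1, 1, of_nat n:] * monom (1::int) d + ([:1, -1:] * [:1, 0, 1:]) * pderiv (monom 1 d)) x" for x
  proof (cases d)
    case 0 then show ?thesis by (simp add: poly_monom pderiv_monom algebra_simps)
  next
    case (Suc m)
    then show ?thesis using assms by (simp add: poly_monom pderiv_monom of_nat_diff algebra_simps)
  qed
  then show ?thesis using poly_eq_poly_eq_iff by blast
qed

lemma des_le: "alt_des_B n \<sigma> \<le> n"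
proof -
  have "alt_des_B n \<sigma> \<le> card {0..<n}" unfolding alt_des_B_def by (rule card_mono) auto
  then show ?thesis by simp
qed

lemma des_pos: assumes "j < n" "alt_descent \<sigma> j" shows "1 \<le> alt_des_B n \<sigma>"
proof -
  have "{i \<in> {0..<n}. alt_descent \<sigma> i} \<noteq> {}" using assms by auto
  then show ?thesis unfolding alt_des_B_def by (simp add: Suc_le_eq card_gt_0_iff)
qed

lemma inner_sum:
  assumes s: "\<sigma> \<in> P n" and jn: "j \<le> n"
  defines "d \<equiv> alt_des_B n \<sigma>"
  shows "(\<Sum>e\<in>{1,-1}. monom (1::int) (alt_des_B (n+1) (ins n \<sigma> j e))) =
    (if j < n then (if alt_descent \<sigma> j then monom 1 (d-1) + monom 1 (d+1) else monom 1 d + monom 1 (d+2))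
     else monom 1 d + monom 1 (d+1))"
proof -
  have p1: "int (alt_des_B (n+1) (ins n \<sigma> j 1)) = int d - (if j < n \<and> alt_descent \<sigma> j then 1 else 0)
     + (if j < n then 2 else 1) * (if even j then 1 else 0)"
    using des_ins[OF s jn, of 1] by (simp add: d_def)
  have p2: "int (alt_des_B (n+1) (ins n \<sigma> j (-1))) = int d - (if j < n \<and> alt_descent \<sigma> j then 1 else 0)
     + (if j < n then 2 else 1) * (if odd j then 1 else 0)"
    using des_ins[OF s jn, of "-1"] by (simp add: d_def)
  have dp: "j < n \<Longrightarrow> alt_descent \<sigma> j \<Longrightarrow> 1 \<le> d" using des_pos by (simp add: d_def)
  have q1: "alt_des_B (n+1) (ins n \<sigma> j 1) = (if j < n \<and> alt_descent \<sigma> j then d - 1 else d)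
     + (if j < n then 2 else 1) * (if even j then 1 else 0)"
    by (cases "j < n"; cases "alt_descent \<sigma> j"; cases "even j") (use p1 dp in auto)
  have q2: "alt_des_B (n+1) (ins n \<sigma> j (-1)) = (if j < n \<and> alt_descent \<sigma> j then d - 1 else d)
     + (if j < n then 2 else 1) * (if odd j then 1 else 0)"
    by (cases "j < n"; cases "alt_descent \<sigma> j"; cases "even j") (use p2 dp in auto)
  have "(\<Sum>e\<in>{1,-1}. monom (1::int) (alt_des_B (n+1) (ins n \<sigma> j e))) =
     monom 1 (alt_des_B (n+1) (ins n \<sigma> j 1)) + monom 1 (alt_des_B (n+1) (ins n \<sigma> j (-1)))" by simp
  also have "\<dots> = (if j < n then (if alt_descent \<sigma> j then monom 1 (d-1) + monom 1 (d+1) else monom 1 d + monom 1 (d+2))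
     else monom 1 d + monom 1 (d+1))"
    unfolding q1 q2
  proof (cases "j < n"; cases "alt_descent \<sigma> j"; cases "even j")
  qed (use dp in \<open>auto simp: add.commute\<close>)
  finally show ?thesis .
qed

lemma per_sigma:
  assumes s: "\<sigma> \<in> P n"
  shows "(\<Sum>(j,e)\<in>{0..n}\<times>{1,-1}. monom (1::int) (alt_des_B (n+1) (ins n \<sigma> j e)))
    = [:of_nat n + 1, 1, of_nat n:] * monom 1 (alt_des_B n \<sigma>)
      + ([:1, -1:] * [:1, 0, 1:]) * pderiv (monom 1 (alt_des_B n \<sigma>))"
proof -
  define d where "d = alt_des_B n \<sigma>"
  define Q where "Q = {i. alt_descent \<sigma> i}"
  have "(\<Sum>(j,e)\<in>{0..n}\<times>{1,-1}. monom (1::int) (alt_des_B (n+1) (ins n \<sigma> j e)))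
     = (\<Sum>j\<in>{0..n}. \<Sum>e\<in>{1,-1}. monom (1::int) (alt_des_B (n+1) (ins n \<sigma> j e)))"
    by (simp only: sum.cartesian_product' split_conv)
  also have "\<dots> = (\<Sum>j\<in>{0..n}. (if j < n then (if alt_descent \<sigma> j then monom 1 (d-1) + monom 1 (d+1) else monom 1 d + monom 1 (d+2))
     else monom 1 d + monom 1 (d+1)))"
    by (rule sum.cong[OF refl], subst inner_sum[OF s]) (auto simp: d_def)
  also have "\<dots> = (\<Sum>j<n. (if alt_descent \<sigma> j then monom 1 (d-1) + monom 1 (d+1) else monom 1 d + monom 1 (d+2)))
      + (monom 1 d + monom 1 (d+1))"
    by (simp add: atLeast0AtMost flip: lessThan_Suc_atMost)
  also have "(\<Sum>j<n. (if alt_descent \<sigma> j then monom 1 (d-1) + monom 1 (d+1) else monom 1 d + monom (1::int) (d+2)))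
     = of_nat (card ({..<n} \<inter> Q)) * (monom 1 (d-1) + monom 1 (d+1))
       + of_nat (card ({..<n} \<inter> - Q)) * (monom 1 d + monom 1 (d+2))"
    by (simp add: sum.If_cases Q_def)
  also have "card ({..<n} \<inter> Q) = d"
    unfolding d_def alt_des_B_def Q_def by (rule arg_cong[where f=card]) auto
  also have "card ({..<n} \<inter> - Q) = n - d"
  proof -
    have "{..<n} \<inter> - Q = {..<n} - ({..<n} \<inter> Q)" by auto
    then have "card ({..<n} \<inter> - Q) = card {..<n} - card ({..<n} \<inter> Q)"
      by (simp add: card_Diff_subset)
    then show ?thesis using \<open>card ({..<n} \<inter> Q) = d\<close> by simp
  qed
  finally show ?thesis using poly_id[OF des_le[of n \<sigma>]] by (simp add: d_def)
qed

theorem mainTheorem10: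
  fixes n :: nat
  assumes "n \<ge> 1"
  shows "Bhat (n + 1) = [:of_nat n + 1, 1, of_nat n:] * Bhat n
           + ([:1, -1:] * [:1, 0, 1:]) * pderiv (Bhat n)"
proof -
  define h where "h = (\<lambda>(\<sigma>, j, e). ins n \<sigma> j e)"
  define D where "D = P n \<times> ({0..n} \<times> {1::int,-1})"
  have bij: "bij_betw h D (P (n+1))"
    unfolding bij_betw_def
  proof
    show "inj_on h D"
    proof (rule inj_onI)
      fix x y assume x: "x \<in> D" and y: "y \<in> D" and eq: "h x = h y"
      obtain \<sigma> j e where xe: "x = (\<sigma>, j, e)" by (cases x) auto
      obtain \<sigma>' j' e' where ye: "y = (\<sigma>', j', e')" by (cases y) auto
      have "\<sigma> \<in> P n" "j \<le> n" "e \<in> {1,-1}" using x xe by (auto simp: D_def)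
      moreover have "\<sigma>' \<in> P n" "j' \<le> n" "e' \<in> {1,-1}" using y ye by (auto simp: D_def)
      moreover have "ins n \<sigma> j e = ins n \<sigma>' j' e'" using eq xe ye by (simp add: h_def)
      ultimately have "\<sigma> = \<sigma>' \<and> j = j' \<and> e = e'" using ins_inj by blast
      then show "x = y" using xe ye by simp
    qed
    show "h ` D = P (n+1)"
    proof
      show "h ` D \<subseteq> P (n+1)"
      proof
        fix y assume "y \<in> h ` D"
        then obtain x where x: "x \<in> D" "y = h x" by blast
        obtain \<sigma> j e where xe: "x = (\<sigma>, j, e)" by (cases x) auto
        have "\<sigma> \<in> P n" "j \<le> n" "e \<in> {1,-1}" "y = ins n \<sigma> j e"
          using x xe by (auto simp: D_def h_def)
        then show "y \<in> P (n+1)" using ins_mem by blast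
      qed
      show "P (n+1) \<subseteq> h ` D"
      proof
        fix \<tau> assume "\<tau> \<in> P (n+1)"
        then obtain \<sigma> j e where "\<sigma> \<in> P n" "j \<le> n" "e \<in> {1,-1}" "\<tau> = ins n \<sigma> j e"
          using ins_surj by blast
        then show "\<tau> \<in> h ` D" unfolding h_def D_def by (auto intro!: image_eqI[where x="(\<sigma>, j, e)"])
      qed
    qed
  qed
  have "Bhat (n+1) = (\<Sum>x\<in>D. monom 1 (alt_des_B (n+1) (h x)))"
    unfolding Bhat_def by (rule sum.reindex_bij_betw[OF bij, symmetric])
  also have "\<dots> = (\<Sum>\<sigma>\<in>P n. \<Sum>(j,e)\<in>{0..n}\<times>{1,-1}. monom (1::int) (alt_des_B (n+1) (ins n \<sigma> j e)))"
    unfolding D_def h_def sum.cartesian_product' by (simp add: case_prod_beta)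
  also have "\<dots> = (\<Sum>\<sigma>\<in>P n. [:of_nat n + 1, 1, of_nat n:] * monom 1 (alt_des_B n \<sigma>)
      + ([:1, -1:] * [:1, 0, 1:]) * pderiv (monom 1 (alt_des_B n \<sigma>)))"
    by (rule sum.cong[OF refl], rule per_sigma) simp
  also have "\<dots> = [:of_nat n + 1, 1, of_nat n:] * Bhat n + ([:1, -1:] * [:1, 0, 1:]) * pderiv (Bhat n)"
    using higher_pderiv_sum[of 1 "\<lambda>\<sigma>. monom (1::int) (alt_des_B n \<sigma>)" "P n"]
    by (simp add: Bhat_def sum.distrib sum_distrib_left)
  finally show ?thesis .
qed

end
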